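(* Let $(X,d)$ be a compact metric space, $T:X\to X$ continuous, $Z\subset X$ non-empty, and $\Phi=\{\varphi_n:X\to\mathbb{R}\}_{n\in\mathbb{N}}$ a sequence of continuous functions satisfying the tempered distortion condition $\lim_{\varepsilon\to 0}\limsup_{n\to\infty}\varphi_n(\varepsilon)/n=0$, where $\varphi_n(\varepsilon)=\sup\{|\varphi_n(x)-\varphi_n(y)|: x\in X,\ y\in B_n(x,e^{-n\varepsilon})\}$. Then for every $\theta>0$ there exists $\varepsilon_0>0$ such that for every $0<\varepsilon<\varepsilon_0$ there exists $N_0\in\mathbb{N}$ such that for all $N\ge N_0$ and all $s\in\mathbb{R}$, $$\mathcal{M}^{s+\theta}_{N,\varepsilon/2}(Z,\Phi)\le W^s_{N,\varepsilon}(Z,\Phi)\le M^s_{N,\varepsilon}(Z,\Phi).$$ Consequently $P^{\tilde B}_Z(T,\Phi)=P^{\widetilde{WB}}_Z(T,\Phi)$.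
   Context: The neutralized Bowen ball is $B_n(x,e^{-n\varepsilon})=\{y\in X: d(T^jx,T^jy)<e^{-n\varepsilon}\ \forall\,0\le j\le n-1\}$. For $\varepsilon>0$, $N\in\mathbb{N}$, $s\in\mathbb{R}$: $M^s_{N,\varepsilon}(Z,\Phi)=\inf\sum_{i\in I}\exp[-n_is+\sup_{y\in B_{n_i}(x_i,e^{-n_i\varepsilon})}\varphi_{n_i}(y)]$, infimum over all finite or countable covers $\{B_{n_i}(x_i,e^{-n_i\varepsilon})\}_{i\in I}$ of $Z$ with $n_i\ge N$, $x_i\in X$; $M^s_\varepsilon=\lim_{N\to\infty}M^s_{N,\varepsilon}$; $M_\varepsilon(Z,\Phi)=\inf\{s:M^s_\varepsilon(Z,\Phi)=0\}=\sup\{s:M^s_\varepsilon(Z,\Phi)=\infty\}$; $P^{\tilde B}_Z(T,\Phi)=\lim_{\varepsilon\to0}M_\varepsilon(Z,\Phi)$. $\mathcal{M}^s_{N,\varepsilon}(Z,\Phi)=\inf\sum_{i\in I}\exp[-n_is+\varphi_{n_i}(x_i)]$, infimum over the same class of covers. Weighted version: $W^s_{N,\varepsilon}(Z,\Phi)=\inf\sum_{i\in I}c_i\exp[-n_is+\sup_{y\in B_{n_i}(x_i,e^{-n_i\varepsilon})}\varphi_{n_i}(y)]$, infimum over all finite or countable families $\{(B_{n_i}(x_i,e^{-n_i\varepsilon}),c_i)\}_{i\in I}$ with $0<c_i<\infty$, $x_i\in X$, $n_i\ge N$ and $\sum_ic_i\chi_{B_{n_i}(x_i,e^{-n_i\varepsilon})}\ge\chi_Z$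 ($\chi_A$ the indicator of $A$); $W^s_\varepsilon(Z,\Phi)=\lim_{N\to\infty}W^s_{N,\varepsilon}(Z,\Phi)$; $W_\varepsilon(Z,\Phi)=\inf\{s:W^s_\varepsilon(Z,\Phi)=0\}=\sup\{s:W^s_\varepsilon(Z,\Phi)=\infty\}$; $P^{\widetilde{WB}}_Z(T,\Phi)=\lim_{\varepsilon\to0}W_\varepsilon(Z,\Phi)$. *)

theory Defs
  imports "HOL-Analysis.Analysis"
begin

definition bowen :: "'a::metric_space set \<Rightarrow> ('a \<Rightarrow> 'a) \<Rightarrow> nat \<Rightarrow> 'a \<Rightarrow> real \<Rightarrow> 'a set" where
  "bowen X T n x r = {y \<in> X. \<forall>j<n. dist ((T ^^ j) x) ((T ^^ j) y) < r}"

definition nbowen :: "'a::metric_space set \<Rightarrow> ('a \<Rightarrow> 'a) \<Rightarrow> nat \<Rightarrow> 'a \<Rightarrow> real \<Rightarrow> 'a set" where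
  "nbowen X T n x eps = bowen X T n x (exp (- real n * eps))"

definition supball :: "'a::metric_space set \<Rightarrow> ('a \<Rightarrow> 'a) \<Rightarrow> (nat \<Rightarrow> 'a \<Rightarrow> real) \<Rightarrow> nat \<Rightarrow> 'a \<Rightarrow> real \<Rightarrow> real" where
  "supball X T \<phi> n x eps = (SUP y \<in> nbowen X T n x eps. \<phi> n y)"

definition distortion :: "'a::metric_space set \<Rightarrow> ('a \<Rightarrow> 'a) \<Rightarrow> (nat \<Rightarrow> 'a \<Rightarrow> real) \<Rightarrow> nat \<Rightarrow> real \<Rightarrow> real" where
  "distortion X T \<phi> n eps = (SUP x \<in> X. SUP y \<in> nbowen X T n x eps. \<bar>\<phi> n x - \<phi> n y\<bar>)"

text \<open>Covers are indexed by a set I of naturals (finite or countable), centres x i, times n i.\<close>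
definition Mcov :: "'a::metric_space set \<Rightarrow> ('a \<Rightarrow> 'a) \<Rightarrow> (nat \<Rightarrow> 'a \<Rightarrow> real) \<Rightarrow> 'a set \<Rightarrow> real \<Rightarrow> nat \<Rightarrow> real \<Rightarrow> ennreal" where
  "Mcov X T \<phi> Z s N eps =
    (INF (I, x, n) \<in> {(I :: nat set, x :: nat \<Rightarrow> 'a, n :: nat \<Rightarrow> nat).
         (\<forall>i\<in>I. x i \<in> X \<and> N \<le> n i) \<and> Z \<subseteq> (\<Union>i\<in>I. nbowen X T (n i) (x i) eps)}.
       (\<Sum>i. if i \<in> I then ennreal (exp (- real (n i) * s + supball X T \<phi> (n i) (x i) eps)) else 0))"

definition Mcalcov :: "'a::metric_space set \<Rightarrow> ('a \<Rightarrow> 'a) \<Rightarrow> (nat \<Rightarrow> 'a \<Rightarrow> real) \<Rightarrow> 'a set \<Rightarrow> real \<Rightarrow> nat \<Rightarrow> real \<Rightarrow> ennreal" where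
  "Mcalcov X T \<phi> Z s N eps =
    (INF (I, x, n) \<in> {(I :: nat set, x :: nat \<Rightarrow> 'a, n :: nat \<Rightarrow> nat).
         (\<forall>i\<in>I. x i \<in> X \<and> N \<le> n i) \<and> Z \<subseteq> (\<Union>i\<in>I. nbowen X T (n i) (x i) eps)}.
       (\<Sum>i. if i \<in> I then ennreal (exp (- real (n i) * s + \<phi> (n i) (x i))) else 0))"

definition Wcov :: "'a::metric_space set \<Rightarrow> ('a \<Rightarrow> 'a) \<Rightarrow> (nat \<Rightarrow> 'a \<Rightarrow> real) \<Rightarrow> 'a set \<Rightarrow> real \<Rightarrow> nat \<Rightarrow> real \<Rightarrow> ennreal" where
  "Wcov X T \<phi> Z s N eps =
    (INF (I, x, n, c) \<in> {(I :: nat set, x :: nat \<Rightarrow> 'a, n :: nat \<Rightarrow> nat, c :: nat \<Rightarrow> real).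
         (\<forall>i\<in>I. x i \<in> X \<and> N \<le> n i \<and> 0 < c i) \<and>
         (\<forall>z\<in>X. (if z \<in> Z then 1 else 0) \<le>
             (\<Sum>i. if i \<in> I \<and> z \<in> nbowen X T (n i) (x i) eps then ennreal (c i) else 0))}.
       (\<Sum>i. if i \<in> I then ennreal (c i) * ennreal (exp (- real (n i) * s + supball X T \<phi> (n i) (x i) eps)) else 0))"

definition Mlim where "Mlim X T \<phi> Z s eps = lim (\<lambda>N. Mcov X T \<phi> Z s N eps)"
definition Wlim where "Wlim X T \<phi> Z s eps = lim (\<lambda>N. Wcov X T \<phi> Z s N eps)"

definition Mcrit :: "'a::metric_space set \<Rightarrow> ('a \<Rightarrow> 'a) \<Rightarrow> (nat \<Rightarrow> 'a \<Rightarrow> real) \<Rightarrow> 'a set \<Rightarrow> real \<Rightarrow> ereal" where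
  "Mcrit X T \<phi> Z eps = Inf {ereal s | s. Mlim X T \<phi> Z s eps = 0}"
definition Wcrit :: "'a::metric_space set \<Rightarrow> ('a \<Rightarrow> 'a) \<Rightarrow> (nat \<Rightarrow> 'a \<Rightarrow> real) \<Rightarrow> 'a set \<Rightarrow> real \<Rightarrow> ereal" where
  "Wcrit X T \<phi> Z eps = Inf {ereal s | s. Wlim X T \<phi> Z s eps = 0}"

definition PB :: "'a::metric_space set \<Rightarrow> ('a \<Rightarrow> 'a) \<Rightarrow> (nat \<Rightarrow> 'a \<Rightarrow> real) \<Rightarrow> 'a set \<Rightarrow> ereal" where
  "PB X T \<phi> Z = Lim (at_right 0) (\<lambda>eps. Mcrit X T \<phi> Z eps)"
definition PWB :: "'a::metric_space set \<Rightarrow> ('a \<Rightarrow> 'a) \<Rightarrow> (nat \<Rightarrow> 'a \<Rightarrow> real) \<Rightarrow> 'a set \<Rightarrow> ereal" where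
  "PWB X T \<phi> Z = Lim (at_right 0) (\<lambda>eps. Wcrit X T \<phi> Z eps)"

end

theory Submission
  imports Defs
begin

lemma sel_disj:
  fixes B :: "nat \<Rightarrow> 'a set" and lev :: "nat \<Rightarrow> nat"
  assumes "finite Q"
  shows "\<exists>J1\<subseteq>Q. (\<forall>i\<in>J1. \<forall>j\<in>J1. i \<noteq> j \<longrightarrow> B i \<inter> B j = {}) \<and>
     (\<forall>i\<in>Q. B i \<noteq> {} \<longrightarrow> (\<exists>j\<in>J1. lev j \<le> lev i \<and> B i \<inter> B j \<noteq> {}))"
  using assms
proof (induction rule: finite_ranking_induct[where f=lev])
  case empty
  then show ?case by auto
next
  case (insert a S)
  then obtain J where J: "J \<subseteq> S" "\<forall>i\<in>J. \<forall>j\<in>J. i \<noteq> j \<longrightarrow> B i \<inter> B j = {}"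
     "\<forall>i\<in>S. B i \<noteq> {} \<longrightarrow> (\<exists>j\<in>J. lev j \<le> lev i \<and> B i \<inter> B j \<noteq> {})" by blast
  show ?case
  proof (cases "B a = {} \<or> (\<exists>j\<in>J. B a \<inter> B j \<noteq> {})")
    case True
    have "\<exists>j\<in>J. lev j \<le> lev a \<and> B a \<inter> B j \<noteq> {}" if "B a \<noteq> {}"
    proof -
      from True that obtain j where "j \<in> J" "B a \<inter> B j \<noteq> {}" by blast
      moreover have "lev j \<le> lev a" using insert.hyps(2) J(1) \<open>j \<in> J\<close> by blast
      ultimately show ?thesis by blast
    qed
    then have "\<forall>i\<in>insert a S. B i \<noteq> {} \<longrightarrow> (\<exists>j\<in>J. lev j \<le> lev i \<and> B i \<inter> B j \<noteq> {})"
      using J(3) by blast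
    then show ?thesis using J(1,2) by (intro exI[of _ J]) blast
  next
    case False
    show ?thesis
      apply (rule exI[of _ "insert a J"])
    proof (intro conjI)
      show "insert a J \<subseteq> insert a S" using J(1) by blast
      show "\<forall>i\<in>insert a J. \<forall>j\<in>insert a J. i \<noteq> j \<longrightarrow> B i \<inter> B j = {}"
        using False J(2) by (simp add: Int_commute)
      show "\<forall>i\<in>insert a S. B i \<noteq> {} \<longrightarrow> (\<exists>j\<in>insert a J. lev j \<le> lev i \<and> B i \<inter> B j \<noteq> {})"
        using J(3) by blast
    qed
  qed
qed

lemma frac_cover:
  fixes B E :: "nat \<Rightarrow> 'a set" and lev :: "nat \<Rightarrow> nat" and w c :: "nat \<Rightarrow> real"
  assumes H: "\<And>i j. i \<in> P \<Longrightarrow> j \<in> P \<Longrightarrow> lev j \<le> lev i \<Longrightarrow> B i \<inter> B j \<noteq> {} \<Longrightarrow> B i \<subseteq> E j"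
    and fin: "finite P" and w0: "\<And>i. 0 \<le> w i"
  shows "card {i\<in>P. 0 < c i} = m \<Longrightarrow> (\<forall>i\<in>P. 0 \<le> c i) \<Longrightarrow> 0 < t \<Longrightarrow>
     (\<forall>z\<in>K. t \<le> (\<Sum>i\<in>P. if z \<in> B i then c i else 0)) \<Longrightarrow>
     \<exists>J\<subseteq>P. K \<subseteq> (\<Union>j\<in>J. E j) \<and> t * sum w J \<le> (\<Sum>i\<in>P. c i * w i)"
proof (induction m arbitrary: c t rule: less_induct)
  case (less m c t)
  have cw0: "0 \<le> (\<Sum>i\<in>P. c i * w i)"
    using less.prems(2) w0 by (intro sum_nonneg) simp
  show ?case
  proof (cases "K = {}")
    case True
    then show ?thesis using cw0 by (intro exI[of _ "{}"]) simp
  next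
    case False
    define Q where "Q = {i\<in>P. 0 < c i}"
    have finQ: "finite Q" using fin unfolding Q_def by simp
    obtain J1 where J1: "J1 \<subseteq> Q" "\<forall>i\<in>J1. \<forall>j\<in>J1. i \<noteq> j \<longrightarrow> B i \<inter> B j = {}"
      "\<forall>i\<in>Q. B i \<noteq> {} \<longrightarrow> (\<exists>j\<in>J1. lev j \<le> lev i \<and> B i \<inter> B j \<noteq> {})"
      using sel_disj[OF finQ, of B lev] by blast
    have J1P: "J1 \<subseteq> P" using J1(1) Q_def by auto
    have finJ1: "finite J1" using J1P fin finite_subset by blast
    have inQ: "\<exists>i\<in>Q. z \<in> B i" if "z \<in> K" for z
    proof (rule ccontr)
      assume nz: "\<not> ?thesis"
      have "\<forall>i\<in>P. (if z \<in> B i then c i else 0) = 0"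
      proof
        fix i assume i: "i \<in> P"
        show "(if z \<in> B i then c i else 0) = 0"
        proof (cases "z \<in> B i")
          case True
          then have "\<not> 0 < c i" using nz i unfolding Q_def by blast
          then show ?thesis using less.prems(2) i True by force
        qed simp
      qed
      then have "(\<Sum>i\<in>P. if z \<in> B i then c i else 0) = 0" by simp
      then show False using less.prems(3,4) that by fastforce
    qed
    have cov1: "K \<subseteq> (\<Union>j\<in>J1. E j)"
    proof
      fix z assume "z \<in> K"
      then obtain i where i: "i \<in> Q" "z \<in> B i" using inQ by blast
      then obtain j where j: "j \<in> J1" "lev j \<le> lev i" "B i \<inter> B j \<noteq> {}" using J1(3) by blast
      have "B i \<subseteq> E j" using H[of i j] i j J1P Q_def by auto
      then show "z \<in> (\<Union>j\<in>J1. E j)" using i j by blast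
    qed
    have J1ne: "J1 \<noteq> {}"
    proof -
      from False obtain z where "z \<in> K" by blast
      then obtain i where i: "i \<in> Q" "z \<in> B i" using inQ by blast
      then show ?thesis using J1(3) by blast
    qed
    have cpos: "0 < c j" if "j \<in> J1" for j using that J1(1) Q_def by auto
    define lam where "lam = min t (Min (c ` J1))"
    have lampos: "0 < lam" unfolding lam_def using less.prems(3) finJ1 J1ne cpos by auto
    have lamc: "lam \<le> c j" if "j \<in> J1" for j unfolding lam_def using finJ1 that
      by (simp add: min.coboundedI2)
    have lamt: "lam \<le> t" unfolding lam_def by simp
    have sumJ1: "lam * sum w J1 \<le> (\<Sum>i\<in>P. c i * w i)"
    proof -
      have "lam * sum w J1 = (\<Sum>i\<in>J1. lam * w i)" by (simp add: sum_distrib_left)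
      also have "\<dots> \<le> (\<Sum>i\<in>J1. c i * w i)" using lamc w0 by (intro sum_mono mult_right_mono) auto
      also have "\<dots> \<le> (\<Sum>i\<in>P. c i * w i)" using J1P fin less.prems(2) w0
        by (intro sum_mono2) auto
      finally show ?thesis .
    qed
    show ?thesis
    proof (cases "t * sum w J1 \<le> (\<Sum>i\<in>P. c i * w i)")
      case True
      then show ?thesis using J1P cov1 by blast
    next
      case False
      have lamlt: "lam < t"
      proof (rule ccontr)
        assume "\<not> lam < t" then have "lam = t" using lamt by simp
        then show False using sumJ1 False by simp
      qed
      then have "lam = Min (c ` J1)" unfolding lam_def by simp
      moreover have "Min (c ` J1) \<in> c ` J1" using finJ1 J1ne by simp
      ultimately obtain j0 where j0: "j0 \<in> J1" "c j0 = lam" by force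
      define c' where "c' i = (if i \<in> J1 then c i - lam else c i)" for i
      have c'0: "\<forall>i\<in>P. 0 \<le> c' i" using less.prems(2) lamc unfolding c'_def by auto
      have sub: "{i\<in>P. 0 < c' i} \<subset> {i\<in>P. 0 < c i}"
      proof
        show "{i\<in>P. 0 < c' i} \<subseteq> {i\<in>P. 0 < c i}" using less.prems(2) lampos unfolding c'_def by auto
        show "{i\<in>P. 0 < c' i} \<noteq> {i\<in>P. 0 < c i}"
        proof
          assume eq: "{i\<in>P. 0 < c' i} = {i\<in>P. 0 < c i}"
          have "j0 \<in> {i\<in>P. 0 < c i}" using j0 J1P cpos by auto
          moreover have "j0 \<notin> {i\<in>P. 0 < c' i}" using j0 unfolding c'_def by auto
          ultimately show False using eq by blast
        qed
      qed
      have cardlt: "card {i\<in>P. 0 < c' i} < m"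
        using psubset_card_mono[OF _ sub] fin less.prems(1) by simp
      have tpos: "0 < t - lam" using lamlt by simp
      have wt': "\<forall>z\<in>K. t - lam \<le> (\<Sum>i\<in>P. if z \<in> B i then c' i else 0)"
      proof
        fix z assume zK: "z \<in> K"
        have eq1: "(\<Sum>i\<in>P. if z \<in> B i then c' i else 0) =
              (\<Sum>i\<in>P. if z \<in> B i then c i else 0) - (\<Sum>i\<in>J1. if z \<in> B i then lam else 0)"
        proof -
          have "(\<Sum>i\<in>P. if z \<in> B i then c' i else 0) =
              (\<Sum>i\<in>P. (if z \<in> B i then c i else 0) - (if i \<in> J1 then (if z \<in> B i then lam else 0) else 0))"
            unfolding c'_def by (intro sum.cong) auto
          also have "\<dots> = (\<Sum>i\<in>P. if z \<in> B i then c i else 0) - (\<Sum>i\<in>P. if i \<in> J1 then (if z \<in> B i then lam else 0) else 0)"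
            by (simp add: sum_subtractf)
          also have "(\<Sum>i\<in>P. if i \<in> J1 then (if z \<in> B i then lam else 0) else 0) = (\<Sum>i\<in>J1. if z \<in> B i then lam else 0)"
            using sum.inter_restrict[OF fin, of "\<lambda>i. if z \<in> B i then lam else 0" J1] J1P
            by (simp add: Int_absorb1)
          finally show ?thesis .
        qed
        have le1: "(\<Sum>i\<in>J1. if z \<in> B i then lam else 0) \<le> lam"
        proof (cases "\<exists>j\<in>J1. z \<in> B j")
          case True
          then obtain j where j: "j \<in> J1" "z \<in> B j" by blast
          have others: "\<forall>i\<in>J1 - {j}. z \<notin> B i" using J1(2) j by blast
          have "(\<Sum>i\<in>J1. if z \<in> B i then lam else 0) = (if z \<in> B j then lam else 0) + (\<Sum>i\<in>J1 - {j}. if z \<in> B i then lam else 0)"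
            by (rule sum.remove[OF finJ1 j(1)])
          also have "(\<Sum>i\<in>J1 - {j}. if z \<in> B i then lam else 0) = 0" using others by simp
          finally show ?thesis using j by simp
        next
          case False
          then show ?thesis using lampos by simp
        qed
        show "t - lam \<le> (\<Sum>i\<in>P. if z \<in> B i then c' i else 0)"
          using eq1 le1 less.prems(4) zK by fastforce
      qed
      obtain J' where J': "J' \<subseteq> P" "K \<subseteq> (\<Union>j\<in>J'. E j)"
        "(t - lam) * sum w J' \<le> (\<Sum>i\<in>P. c' i * w i)"
        using less.IH[OF cardlt refl c'0 tpos wt'] by blast
      have "(\<Sum>i\<in>P. c' i * w i) = (\<Sum>i\<in>P. c i * w i) - lam * sum w J1"
      proof -
        have "(\<Sum>i\<in>P. c' i * w i) = (\<Sum>i\<in>P. c i * w i - (if i \<in> J1 then lam * w i else 0))"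
          unfolding c'_def by (intro sum.cong) (auto simp: algebra_simps)
        also have "\<dots> = (\<Sum>i\<in>P. c i * w i) - (\<Sum>i\<in>P. if i \<in> J1 then lam * w i else 0)"
          by (simp add: sum_subtractf)
        also have "(\<Sum>i\<in>P. if i \<in> J1 then lam * w i else 0) = (\<Sum>i\<in>J1. lam * w i)"
          using sum.inter_restrict[OF fin, of "\<lambda>i. lam * w i" J1] J1P
          by (simp add: Int_absorb1)
        finally show ?thesis by (simp add: sum_distrib_left)
      qed
      with J'(3) have A: "(t - lam) * sum w J' \<le> (\<Sum>i\<in>P. c i * w i) - lam * sum w J1" by simp
      define a where "a = sum w J'"
      define b where "b = sum w J1"
      define C where "C = (\<Sum>i\<in>P. c i * w i)"
      have A': "(t - lam) * a \<le> C - lam * b" using A a_def b_def C_def by simp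
      have F: "C < t * b" using False b_def C_def by simp
      have "(t - lam) * (t * a) = t * ((t - lam) * a)" by (simp add: algebra_simps)
      also have "\<dots> \<le> t * (C - lam * b)" using A' less.prems(3) by (intro mult_left_mono) auto
      also have "\<dots> = t * C - lam * (t * b)" by (simp add: algebra_simps)
      also have "\<dots> < t * C - lam * C" using F lampos by simp
      also have "\<dots> = (t - lam) * C" by (simp add: algebra_simps)
      finally have "t * a < C" using tpos by (simp add: mult_less_cancel_left)
      then show ?thesis using J'(1,2) a_def C_def by (intro exI[of _ J']) auto
    qed
  qed
qed

lemma sum_chunks:
  fixes L :: "nat \<Rightarrow> nat" and h :: "nat \<Rightarrow> real"
  assumes "L 0 = 0" "mono L"
  shows "(\<Sum>i<L K. h i) = (\<Sum>k<K. \<Sum>i\<in>{L k..<L (Suc k)}. h i)"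
proof (induction K)
  case 0
  then show ?case using assms by simp
next
  case (Suc K)
  have "L K \<le> L (Suc K)" using assms(2) by (simp add: monoD)
  then have "(\<Sum>i<L (Suc K). h i) = (\<Sum>i<L K. h i) + (\<Sum>i\<in>{L K..<L (Suc K)}. h i)"
    using sum.atLeastLessThan_concat[of 0 "L K" "L (Suc K)" h] by (simp add: lessThan_atLeast0)
  then show ?case using Suc by simp
qed

lemma sum_ivl_le_tail:
  fixes f :: "nat \<Rightarrow> real"
  assumes "summable f" "\<And>i. 0 \<le> f i"
  shows "sum f {a..<b} \<le> (\<Sum>i. f (i + a))"
proof -
  have "sum f {a..<b} = sum (\<lambda>i. f (i + a)) {0..<b - a}"
    using sum.atLeastLessThan_shift_0[of f a b] by (simp add: comp_def add.commute)
  also have "\<dots> \<le> (\<Sum>i. f (i + a))"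
    using assms by (intro sum_le_suminf summable_ignore_initial_segment) auto
  finally show ?thesis .
qed

fun Lseq :: "(nat \<Rightarrow> nat) \<Rightarrow> nat \<Rightarrow> nat" where
  "Lseq g 0 = 0"
| "Lseq g (Suc k) = max (Suc (Lseq g k)) (g (Suc k))"

lemma Lseq_smono: "strict_mono (Lseq g)"
  by (rule strict_monoI_Suc) simp

lemma Lseq_ge: "0 < k \<Longrightarrow> g k \<le> Lseq g k"
  by (cases k) auto

lemma geo_sum1:
  fixes \<gamma> :: real
  shows "(\<Sum>k<K. \<gamma> ^ k) * (1 - \<gamma>) = 1 - \<gamma> ^ K"
proof (induction K)
  case (Suc K)
  have "(\<Sum>k<Suc K. \<gamma> ^ k) * (1 - \<gamma>) = (\<Sum>k<K. \<gamma> ^ k) * (1 - \<gamma>) + \<gamma> ^ K * (1 - \<gamma>)"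
    by (simp add: algebra_simps)
  also have "\<dots> = 1 - \<gamma> ^ K + \<gamma> ^ K * (1 - \<gamma>)" using Suc by simp
  also have "\<dots> = 1 - \<gamma> ^ Suc K" by (simp add: algebra_simps)
  finally show ?case .
qed simp

lemma geo_sum2:
  fixes \<gamma> :: real
  shows "(\<Sum>k<K. \<gamma> / 2 ^ (Suc k)) = \<gamma> * (1 - 1 / 2 ^ K)"
  by (induction K) (auto simp: field_simps)

lemma core_cover:
  fixes X Z :: "'a::metric_space set" and T :: "'a \<Rightarrow> 'a" and \<phi> :: "nat \<Rightarrow> 'a \<Rightarrow> real"
    and I :: "nat set" and x :: "nat \<Rightarrow> 'a" and n :: "nat \<Rightarrow> nat" and c :: "nat \<Rightarrow> real"
  assumes eps: "0 < eps"
    and N0: "\<forall>k\<ge>N. 3 * exp (- real k * eps) \<le> exp (- real k * (eps / 2))"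
    and fam: "\<forall>i\<in>I. x i \<in> X \<and> N \<le> n i \<and> 0 < c i"
    and wt: "\<forall>z\<in>X. (if z \<in> Z then 1 else 0) \<le> (\<Sum>i. if i \<in> I \<and> z \<in> nbowen X T (n i) (x i) eps then ennreal (c i) else 0)"
    and ZX: "Z \<subseteq> X"
    and summ: "summable (\<lambda>i. if i \<in> I then c i * exp (- real (n i) * s + \<phi> (n i) (x i)) else 0)"
    and gam: "0 < \<gamma>" "\<gamma> < 1"
  shows "Mcalcov X T \<phi> Z s N (eps / 2) \<le> ennreal ((\<Sum>i. if i \<in> I then c i * exp (- real (n i) * s + \<phi> (n i) (x i)) else 0) / (1 - \<gamma>)^2 + \<gamma>)"
proof -
  define m where "m i = exp (- real (n i) * s + \<phi> (n i) (x i))" for i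
  define f where "f i = (if i \<in> I then c i * m i else 0)" for i
  have m0: "0 \<le> m i" for i unfolding m_def by simp
  have f0: "0 \<le> f i" for i using fam m0 unfolding f_def by (simp add: less_imp_le)
  have sf: "summable f" using summ unfolding f_def m_def .
  define B where "B i = nbowen X T (n i) (x i) eps" for i
  define E where "E i = nbowen X T (n i) (x i) (eps/2)" for i
  have H: "B i \<subseteq> E j" if hyp: "i \<in> I" "j \<in> I" "n j \<le> n i" "B i \<inter> B j \<noteq> {}" for i j
  proof
    fix y assume y: "y \<in> B i"
    obtain z where z: "z \<in> B i" "z \<in> B j" using hyp(4) by blast
    have ri: "exp (- real (n i) * eps) \<le> exp (- real (n j) * eps)" using hyp(3) eps by (simp add: mult_right_mono)
    have three: "3 * exp (- real (n j) * eps) \<le> exp (- real (n j) * (eps/2))" using N0 fam hyp(2) by auto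
    show "y \<in> E j"
      unfolding E_def nbowen_def bowen_def
    proof (intro CollectI conjI allI impI)
      show "y \<in> X" using y unfolding B_def nbowen_def bowen_def by auto
      fix k assume k: "k < n j"
      then have k': "k < n i" using hyp(3) by linarith
      have d1: "dist ((T^^k) (x j)) ((T^^k) z) < exp (- real (n j) * eps)"
        using z(2) k unfolding B_def nbowen_def bowen_def by auto
      have d2: "dist ((T^^k) (x i)) ((T^^k) z) < exp (- real (n i) * eps)"
        using z(1) k' unfolding B_def nbowen_def bowen_def by auto
      have d3: "dist ((T^^k) (x i)) ((T^^k) y) < exp (- real (n i) * eps)"
        using y k' unfolding B_def nbowen_def bowen_def by auto
      have tri: "dist ((T^^k) (x j)) ((T^^k) y) \<le> dist ((T^^k) (x j)) ((T^^k) z) + dist ((T^^k) (x i)) ((T^^k) z) + dist ((T^^k) (x i)) ((T^^k) y)"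
        by (smt (verit) dist_commute dist_triangle)
      show "dist ((T^^k) (x j)) ((T^^k) y) < exp (- real (n j) * (eps/2))"
        using tri d1 d2 d3 ri three by linarith
    qed
  qed
  define \<beta> where "\<beta> k = (1-\<gamma>)^2 * \<gamma>^k" for k :: nat
  have \<beta>pos: "0 < \<beta> k" for k unfolding \<beta>_def using gam by simp
  define r where "r k = \<beta> k * \<gamma> / 2^(Suc k)" for k
  have rpos: "0 < r k" for k unfolding r_def using \<beta>pos gam by simp
  have "\<forall>k. \<exists>M. \<forall>l\<ge>M. norm (\<Sum>i. f (i + l)) < r k" using suminf_exist_split[OF rpos sf] by blast
  then obtain g where g: "\<And>k l. g k \<le> l \<Longrightarrow> norm (\<Sum>i. f (i + l)) < r k" by metis
  define L where "L = Lseq g"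
  have Lsm: "strict_mono L" unfolding L_def by (rule Lseq_smono)
  have L0: "L 0 = 0" unfolding L_def by simp
  have Lmono: "mono L" using Lsm by (rule strict_mono_mono)
  have tail: "(\<Sum>i. f (i + L k)) < r k" if "0 < k" for k
  proof -
    have "norm (\<Sum>i. f (i + L k)) < r k" using g Lseq_ge[OF that] unfolding L_def by blast
    moreover have "0 \<le> (\<Sum>i. f (i + L k))"
      using f0 summable_ignore_initial_segment[OF sf] by (intro suminf_nonneg) auto
    ultimately show ?thesis by simp
  qed
  define P where "P k = {L k..<L (Suc k)} \<inter> I" for k
  have finP: "finite (P k)" for k unfolding P_def by simp
  define K where "K k = {z \<in> Z. \<beta> k < (\<Sum>i\<in>P k. if z \<in> B i then c i else 0)}" for k
  have Zcov: "Z \<subseteq> (\<Union>k. K k)"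
  proof
    fix z assume zZ: "z \<in> Z"
    show "z \<in> (\<Union>k. K k)"
    proof (rule ccontr)
      assume nz: "z \<notin> (\<Union>k. K k)"
      define h where "h i = (if i \<in> I then (if z \<in> B i then c i else 0) else 0)" for i
      have h0: "0 \<le> h i" for i using fam by (simp add: h_def less_imp_le)
      have chunk: "(\<Sum>i\<in>{L k..<L (Suc k)}. h i) \<le> \<beta> k" for k
      proof -
        have "(\<Sum>i\<in>{L k..<L (Suc k)}. h i) = (\<Sum>i\<in>P k. if z \<in> B i then c i else 0)"
          unfolding P_def h_def by (simp add: sum.inter_restrict)
        moreover have "\<not> \<beta> k < (\<Sum>i\<in>P k. if z \<in> B i then c i else 0)" using nz zZ unfolding K_def by auto
        ultimately show ?thesis by simp
      qed
      have part: "(\<Sum>i<n'. h i) \<le> 1 - \<gamma>" for n'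
      proof -
        have "(\<Sum>i<n'. h i) \<le> (\<Sum>i<L n'. h i)"
          using h0 seq_suble[OF Lsm, of n'] by (intro sum_mono2) auto
        also have "\<dots> = (\<Sum>k<n'. \<Sum>i\<in>{L k..<L (Suc k)}. h i)" by (rule sum_chunks[OF L0 Lmono])
        also have "\<dots> \<le> (\<Sum>k<n'. \<beta> k)" by (intro sum_mono chunk)
        also have "\<dots> = (1-\<gamma>) * ((\<Sum>k<n'. \<gamma>^k) * (1-\<gamma>))"
          unfolding \<beta>_def by (simp add: sum_distrib_left sum_distrib_right power2_eq_square algebra_simps)
        also have "\<dots> = (1-\<gamma>) * (1 - \<gamma>^n')" by (simp add: geo_sum1)
        also have "\<dots> \<le> 1-\<gamma>" using gam by (simp add: mult_left_le)
        finally show ?thesis .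
      qed
      have sh: "summable h" by (rule summableI_nonneg_bounded[OF h0 part])
      have hle: "suminf h \<le> 1 - \<gamma>" by (rule suminf_le_const[OF sh part])
      have "(\<Sum>i. if i \<in> I \<and> z \<in> B i then ennreal (c i) else 0) = (\<Sum>i. ennreal (h i))"
        by (intro suminf_cong) (simp add: h_def)
      also have "\<dots> = ennreal (suminf h)" by (rule suminf_ennreal2[OF h0 sh])
      finally have "1 \<le> ennreal (suminf h)" using wt zZ ZX unfolding B_def by force
      then have "1 \<le> suminf h" by (simp add: ennreal_le_iff2)
      then show False using hle gam by linarith
    qed
  qed
  have "\<forall>k. \<exists>J\<subseteq>P k. K k \<subseteq> (\<Union>j\<in>J. E j) \<and> \<beta> k * sum m J \<le> (\<Sum>i\<in>P k. c i * m i)"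
  proof
    fix k
    have HP: "B i \<subseteq> E j" if "i \<in> P k" "j \<in> P k" "n j \<le> n i" "B i \<inter> B j \<noteq> {}" for i j
      using H that unfolding P_def by blast
    show "\<exists>J\<subseteq>P k. K k \<subseteq> (\<Union>j\<in>J. E j) \<and> \<beta> k * sum m J \<le> (\<Sum>i\<in>P k. c i * m i)"
      using frac_cover[where B=B and E=E and lev=n and P="P k" and w=m and c=c and t="\<beta> k" and K="K k",
          OF HP finP m0 refl] fam \<beta>pos unfolding K_def P_def by (auto simp: less_imp_le)
  qed
  then obtain J where J: "\<And>k. J k \<subseteq> P k" "\<And>k. K k \<subseteq> (\<Union>j\<in>J k. E j)"
      "\<And>k. \<beta> k * sum m (J k) \<le> (\<Sum>i\<in>P k. c i * m i)" by metis
  define JJ where "JJ = (\<Union>k. J k)"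
  have JJI: "JJ \<subseteq> I" using J(1) unfolding JJ_def P_def by blast
  have cov: "Z \<subseteq> (\<Union>i\<in>JJ. E i)" using Zcov J(2) unfolding JJ_def by blast
  have mem: "(JJ, x, n) \<in> {(I, x, n). (\<forall>i\<in>I. x i \<in> X \<and> N \<le> n i) \<and> Z \<subseteq> (\<Union>i\<in>I. nbowen X T (n i) (x i) (eps/2))}"
    using fam JJI cov unfolding E_def by auto
  have JJk: "{L k..<L (Suc k)} \<inter> JJ = J k" for k
  proof
    show "J k \<subseteq> {L k..<L (Suc k)} \<inter> JJ" using J(1) unfolding P_def JJ_def by blast
    show "{L k..<L (Suc k)} \<inter> JJ \<subseteq> J k"
    proof
      fix i assume i: "i \<in> {L k..<L (Suc k)} \<inter> JJ"
      then obtain k' where k': "i \<in> J k'" unfolding JJ_def by blast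
      then have i': "L k' \<le> i" "i < L (Suc k')" using J(1)[of k'] unfolding P_def by auto
      have "k' = k"
      proof (rule ccontr)
        assume "k' \<noteq> k"
        then have "Suc k' \<le> k \<or> Suc k \<le> k'" by linarith
        then show False
        proof
          assume "Suc k' \<le> k"
          then have "L (Suc k') \<le> L k" using Lmono by (simp add: monoD)
          then show False using i i' by auto
        next
          assume "Suc k \<le> k'"
          then have "L (Suc k) \<le> L k'" using Lmono by (simp add: monoD)
          then show False using i i' by auto
        qed
      qed
      then show "i \<in> J k" using k' by simp
    qed
  qed
  define q where "q i = (if i \<in> JJ then m i else 0)" for i
  have q0: "0 \<le> q i" for i using m0 by (simp add: q_def)
  have qchunk: "(\<Sum>i\<in>{L k..<L (Suc k)}. q i) = sum m (J k)" for k
  proof -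
    have "(\<Sum>i\<in>{L k..<L (Suc k)}. q i) = sum m ({L k..<L (Suc k)} \<inter> JJ)"
      unfolding q_def by (simp add: sum.inter_restrict)
    then show ?thesis using JJk by simp
  qed
  have Jbound: "sum m (J k) \<le> (if k = 0 then suminf f / \<beta> 0 else 0) + \<gamma> / 2^(Suc k)" for k
  proof -
    have eqf: "(\<Sum>i\<in>P k. c i * m i) = (\<Sum>i\<in>{L k..<L (Suc k)}. f i)"
      unfolding P_def f_def by (simp add: sum.inter_restrict)
    have sle: "sum m (J k) \<le> (\<Sum>i\<in>P k. c i * m i) / \<beta> k"
      using J(3)[of k] \<beta>pos[of k] by (simp add: le_divide_eq mult.commute)
    have tl: "(\<Sum>i\<in>{L k..<L (Suc k)}. f i) \<le> (\<Sum>i. f (i + L k))"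
      by (rule sum_ivl_le_tail[OF sf f0])
    show ?thesis
    proof (cases "k = 0")
      case True
      have "sum m (J k) \<le> suminf f / \<beta> 0"
      proof -
        have "sum f {0..<L (Suc 0)} / \<beta> 0 \<le> suminf f / \<beta> 0"
          using tl True L0 \<beta>pos[of 0] by (intro divide_right_mono) auto
        then show ?thesis using sle eqf True L0 by simp
      qed
      then show ?thesis using True gam by simp
    next
      case False
      have "(\<Sum>i\<in>P k. c i * m i) / \<beta> k \<le> r k / \<beta> k"
        using eqf tl tail[of k] False \<beta>pos[of k] by (intro divide_right_mono) auto
      also have "\<dots> = \<gamma> / 2^(Suc k)" unfolding r_def using \<beta>pos[of k] by simp
      finally show ?thesis using sle False by simp
    qed
  qed
  have qpart: "(\<Sum>i<n'. q i) \<le> suminf f / \<beta> 0 + \<gamma>" for n'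
  proof -
    have "(\<Sum>i<n'. q i) \<le> (\<Sum>i<L n'. q i)"
      using q0 seq_suble[OF Lsm, of n'] by (intro sum_mono2) auto
    also have "\<dots> = (\<Sum>k<n'. sum m (J k))" using sum_chunks[OF L0 Lmono, of q n'] qchunk by simp
    also have "\<dots> \<le> (\<Sum>k<n'. (if k = 0 then suminf f / \<beta> 0 else 0) + \<gamma> / 2^(Suc k))"
      by (intro sum_mono Jbound)
    also have "\<dots> = (\<Sum>k<n'. (if k = 0 then suminf f / \<beta> 0 else 0)) + \<gamma> * (1 - 1 / 2 ^ n')"
      using geo_sum2[of \<gamma> n'] by (simp only: sum.distrib)
    also have "\<dots> \<le> suminf f / \<beta> 0 + \<gamma>"
    proof -
      have "(\<Sum>k<n'. (if k = 0 then suminf f / \<beta> 0 else 0)) \<le> suminf f / \<beta> 0"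
        using suminf_nonneg[OF sf f0] \<beta>pos[of 0] by (simp add: sum.delta')
      moreover have "\<gamma> * (1 - 1 / 2 ^ n') \<le> \<gamma>" using gam by (simp add: mult_left_le)
      ultimately show ?thesis by linarith
    qed
    finally show ?thesis .
  qed
  have sq: "summable q" by (rule summableI_nonneg_bounded[OF q0 qpart])
  have "Mcalcov X T \<phi> Z s N (eps / 2) \<le> (\<Sum>i. if i \<in> JJ then ennreal (exp (- real (n i) * s + \<phi> (n i) (x i))) else 0)"
    unfolding Mcalcov_def by (rule INF_lower2[OF mem]) simp
  also have "\<dots> = (\<Sum>i. ennreal (q i))" by (intro suminf_cong) (simp add: q_def m_def)
  also have "\<dots> = ennreal (suminf q)" by (rule suminf_ennreal2[OF q0 sq])
  also have "\<dots> \<le> ennreal (suminf f / \<beta> 0 + \<gamma>)"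
    by (intro ennreal_leI suminf_le_const[OF sq qpart])
  finally show ?thesis unfolding \<beta>_def f_def m_def by simp
qed

lemma nbowen_sub: "nbowen X T n x eps \<subseteq> X"
  unfolding nbowen_def bowen_def by auto

lemma nbowen_self: "x \<in> X \<Longrightarrow> x \<in> nbowen X T n x eps"
  unfolding nbowen_def bowen_def by auto

lemma nbowen_mono: "eps' \<le> eps \<Longrightarrow> nbowen X T n x eps \<subseteq> nbowen X T n x eps'"
  unfolding nbowen_def bowen_def
proof (intro subsetI, elim CollectE conjE, intro CollectI conjI allI impI)
  fix y j assume "eps' \<le> eps" "y \<in> X" "\<forall>j<n. dist ((T ^^ j) x) ((T ^^ j) y) < exp (- real n * eps)" "j < n"
  moreover have "exp (- real n * eps) \<le> exp (- real n * eps')" using \<open>eps' \<le> eps\<close> by (simp add: mult_left_mono)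
  moreover have "dist ((T ^^ j) x) ((T ^^ j) y) < exp (- real n * eps)" using calculation(3,4) by blast
  ultimately show "dist ((T ^^ j) x) ((T ^^ j) y) < exp (- real n * eps')" by linarith
qed (auto)

lemma bound_phi:
  fixes f :: "'a::metric_space \<Rightarrow> real"
  assumes "compact X" "continuous_on X f"
  obtains Bd where "\<And>y. y \<in> X \<Longrightarrow> \<bar>f y\<bar> \<le> Bd"
proof -
  have "bounded (f ` X)" using assms by (intro compact_imp_bounded compact_continuous_image)
  then obtain Bd where "\<forall>v\<in>f ` X. norm v \<le> Bd" unfolding bounded_iff by blast
  then show ?thesis using that by auto
qed

lemma supball_ge:
  assumes "compact X" "continuous_on X (\<phi> n)" "x \<in> X"
  shows "\<phi> n x \<le> supball X T \<phi> n x eps"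
proof -
  obtain Bd where Bd: "\<And>y. y \<in> X \<Longrightarrow> \<bar>\<phi> n y\<bar> \<le> Bd" using bound_phi[OF assms(1,2)] by blast
  have "bdd_above (\<phi> n ` nbowen X T n x eps)"
    using Bd nbowen_sub[of X T n x eps] by (intro bdd_aboveI[of _ Bd]) force
  then show ?thesis unfolding supball_def by (rule cSUP_upper[OF nbowen_self[OF assms(3)]])
qed

lemma supball_le:
  assumes "compact X" "continuous_on X (\<phi> n)" "x \<in> X"
  shows "supball X T \<phi> n x eps \<le> \<phi> n x + distortion X T \<phi> n eps"
proof -
  obtain Bd where Bd: "\<And>y. y \<in> X \<Longrightarrow> \<bar>\<phi> n y\<bar> \<le> Bd" using bound_phi[OF assms(1,2)] by blast
  have inner_bdd: "bdd_above ((\<lambda>y. \<bar>\<phi> n x' - \<phi> n y\<bar>) ` nbowen X T n x' eps)" if "x' \<in> X" for x'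
  proof (rule bdd_aboveI[of _ "2 * Bd"])
    fix v assume "v \<in> (\<lambda>y. \<bar>\<phi> n x' - \<phi> n y\<bar>) ` nbowen X T n x' eps"
    then obtain y where y: "y \<in> X" "v = \<bar>\<phi> n x' - \<phi> n y\<bar>" using nbowen_sub by blast
    show "v \<le> 2 * Bd" using Bd[OF y(1)] Bd[OF that] y(2) by linarith
  qed
  have inner_le: "(SUP y\<in>nbowen X T n x' eps. \<bar>\<phi> n x' - \<phi> n y\<bar>) \<le> 2 * Bd" if "x' \<in> X" for x'
  proof (rule cSUP_least)
    show "nbowen X T n x' eps \<noteq> {}" using nbowen_self[OF that] by blast
    fix y assume "y \<in> nbowen X T n x' eps"
    then have "y \<in> X" using nbowen_sub by blast
    then show "\<bar>\<phi> n x' - \<phi> n y\<bar> \<le> 2 * Bd" using Bd[OF that] Bd by fastforce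
  qed
  have outer_bdd: "bdd_above ((\<lambda>x'. SUP y\<in>nbowen X T n x' eps. \<bar>\<phi> n x' - \<phi> n y\<bar>) ` X)"
    using inner_le by (intro bdd_aboveI[of _ "2 * Bd"]) blast
  have diff: "\<bar>\<phi> n x - \<phi> n y\<bar> \<le> distortion X T \<phi> n eps" if "y \<in> nbowen X T n x eps" for y
  proof -
    have "\<bar>\<phi> n x - \<phi> n y\<bar> \<le> (SUP y\<in>nbowen X T n x eps. \<bar>\<phi> n x - \<phi> n y\<bar>)"
      by (rule cSUP_upper[OF that inner_bdd[OF assms(3)]])
    also have "\<dots> \<le> distortion X T \<phi> n eps"
      unfolding distortion_def by (rule cSUP_upper[OF assms(3) outer_bdd])
    finally show ?thesis .
  qed
  show ?thesis unfolding supball_def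
  proof (rule cSUP_least)
    show "nbowen X T n x eps \<noteq> {}" using nbowen_self[OF assms(3)] by blast
    fix y assume "y \<in> nbowen X T n x eps"
    then show "\<phi> n y \<le> \<phi> n x + distortion X T \<phi> n eps" using diff by fastforce
  qed
qed

lemma W_le_M:
  fixes s :: real
  shows "Wcov X T \<phi> Z s N eps \<le> Mcov X T \<phi> Z s N eps"
  unfolding Wcov_def Mcov_def
proof (rule INF_mono)
  fix p :: "nat set \<times> (nat \<Rightarrow> _) \<times> (nat \<Rightarrow> nat)" assume p: "p \<in> {(I, x, n). (\<forall>i\<in>I. x i \<in> X \<and> N \<le> n i) \<and> Z \<subseteq> (\<Union>i\<in>I. nbowen X T (n i) (x i) eps)}"
  obtain I x n where pe: "p = (I, x, n)" by (cases p) auto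
  have fam: "\<forall>i\<in>I. x i \<in> X \<and> N \<le> n i" and cov: "Z \<subseteq> (\<Union>i\<in>I. nbowen X T (n i) (x i) eps)"
    using p pe by auto
  have wt: "\<forall>z\<in>X. (if z \<in> Z then 1 else 0) \<le> (\<Sum>i. if i \<in> I \<and> z \<in> nbowen X T (n i) (x i) eps then ennreal ((\<lambda>_. 1) i) else 0)"
  proof
    fix z assume "z \<in> X"
    show "(if z \<in> Z then 1 else 0) \<le> (\<Sum>i. if i \<in> I \<and> z \<in> nbowen X T (n i) (x i) eps then ennreal ((\<lambda>_. 1) i) else 0)"
    proof (cases "z \<in> Z")
      case True
      then obtain i where i: "i \<in> I" "z \<in> nbowen X T (n i) (x i) eps" using cov by blast
      have "(\<Sum>j\<in>{i}. if j \<in> I \<and> z \<in> nbowen X T (n j) (x j) eps then ennreal ((\<lambda>_. 1) j) else 0)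
          \<le> (\<Sum>j. if j \<in> I \<and> z \<in> nbowen X T (n j) (x j) eps then ennreal ((\<lambda>_. 1) j) else 0)"
        by (rule sum_le_suminf[OF summableI]) auto
      then show ?thesis using True i by simp
    qed simp
  qed
  show "\<exists>q\<in>{(I, x, n, c). (\<forall>i\<in>I. x i \<in> X \<and> N \<le> n i \<and> 0 < c i) \<and>
         (\<forall>z\<in>X. (if z \<in> Z then 1 else 0) \<le> (\<Sum>i. if i \<in> I \<and> z \<in> nbowen X T (n i) (x i) eps then ennreal (c i) else 0))}.
       (case q of (I, x, n, c) \<Rightarrow> \<Sum>i. if i \<in> I then ennreal (c i) * ennreal (exp (- real (n i) * s + supball X T \<phi> (n i) (x i) eps)) else 0)
       \<le> (case p of (I, x, n) \<Rightarrow> \<Sum>i. if i \<in> I then ennreal (exp (- real (n i) * s + supball X T \<phi> (n i) (x i) eps)) else 0)"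
  proof (rule bexI[of _ "(I, x, n, \<lambda>_. 1)"])
    show "(I, x, n, \<lambda>_. 1) \<in> {(I, x, n, c). (\<forall>i\<in>I. x i \<in> X \<and> N \<le> n i \<and> 0 < c i) \<and>
         (\<forall>z\<in>X. (if z \<in> Z then 1 else 0) \<le> (\<Sum>i. if i \<in> I \<and> z \<in> nbowen X T (n i) (x i) eps then ennreal (c i) else 0))}"
      using fam wt by auto
    have "(\<Sum>i. if i \<in> I then ennreal 1 * ennreal (exp (- real (n i) * s + supball X T \<phi> (n i) (x i) eps)) else 0)
      \<le> (\<Sum>i. if i \<in> I then ennreal (exp (- real (n i) * s + supball X T \<phi> (n i) (x i) eps)) else 0)"
      by (rule suminf_le[OF _ summableI summableI]) (simp add: ennreal_1)
    then show "(case (I, x, n, \<lambda>_. 1) of (I, x, n, c) \<Rightarrow> \<Sum>i. if i \<in> I then ennreal (c i) * ennreal (exp (- real (n i) * s + supball X T \<phi> (n i) (x i) eps)) else 0)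
       \<le> (case p of (I, x, n) \<Rightarrow> \<Sum>i. if i \<in> I then ennreal (exp (- real (n i) * s + supball X T \<phi> (n i) (x i) eps)) else 0)"
      using pe by simp
  qed
qed

lemma Mcal_mono_s:
  fixes s \<theta> :: real
  shows "0 \<le> \<theta> \<Longrightarrow> Mcalcov X T \<phi> Z (s + \<theta>) N eps \<le> Mcalcov X T \<phi> Z s N eps"
  unfolding Mcalcov_def
proof (rule INF_mono)
  fix p :: "nat set \<times> (nat \<Rightarrow> _) \<times> (nat \<Rightarrow> nat)" assume "0 \<le> \<theta>" and p: "p \<in> {(I, x, n). (\<forall>i\<in>I. x i \<in> X \<and> N \<le> n i) \<and> Z \<subseteq> (\<Union>i\<in>I. nbowen X T (n i) (x i) eps)}"
  obtain I x n where pe: "p = (I, x, n)" by (cases p) auto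
  have "(\<Sum>i. if i \<in> I then ennreal (exp (- real (n i) * (s + \<theta>) + \<phi> (n i) (x i))) else 0)
     \<le> (\<Sum>i. if i \<in> I then ennreal (exp (- real (n i) * s + \<phi> (n i) (x i))) else 0)"
  proof (rule suminf_le[OF _ summableI summableI])
    fix i
    have "- real (n i) * (s + \<theta>) \<le> - real (n i) * s" using \<open>0 \<le> \<theta>\<close> by (simp add: algebra_simps)
    then show "(if i \<in> I then ennreal (exp (- real (n i) * (s + \<theta>) + \<phi> (n i) (x i))) else 0)
       \<le> (if i \<in> I then ennreal (exp (- real (n i) * s + \<phi> (n i) (x i))) else 0)"
      by (auto intro!: ennreal_leI)
  qed
  then show "\<exists>q\<in>{(I, x, n). (\<forall>i\<in>I. x i \<in> X \<and> N \<le> n i) \<and> Z \<subseteq> (\<Union>i\<in>I. nbowen X T (n i) (x i) eps)}.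
     (case q of (I, x, n) \<Rightarrow> \<Sum>i. if i \<in> I then ennreal (exp (- real (n i) * (s + \<theta>) + \<phi> (n i) (x i))) else 0)
     \<le> (case p of (I, x, n) \<Rightarrow> \<Sum>i. if i \<in> I then ennreal (exp (- real (n i) * s + \<phi> (n i) (x i))) else 0)"
    using p pe by (intro bexI[of _ p]) auto
qed

lemma Mcal_le_M:
  fixes s :: real
  assumes "compact X" "\<And>n. continuous_on X (\<phi> n)"
  shows "Mcalcov X T \<phi> Z s N eps \<le> Mcov X T \<phi> Z s N eps"
  unfolding Mcalcov_def Mcov_def
proof (rule INF_mono)
  fix p :: "nat set \<times> (nat \<Rightarrow> _) \<times> (nat \<Rightarrow> nat)" assume p: "p \<in> {(I, x, n). (\<forall>i\<in>I. x i \<in> X \<and> N \<le> n i) \<and> Z \<subseteq> (\<Union>i\<in>I. nbowen X T (n i) (x i) eps)}"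
  obtain I x n where pe: "p = (I, x, n)" by (cases p) auto
  have fam: "\<forall>i\<in>I. x i \<in> X" using p pe by auto
  have "(\<Sum>i. if i \<in> I then ennreal (exp (- real (n i) * s + \<phi> (n i) (x i))) else 0)
     \<le> (\<Sum>i. if i \<in> I then ennreal (exp (- real (n i) * s + supball X T \<phi> (n i) (x i) eps)) else 0)"
  proof (rule suminf_le[OF _ summableI summableI])
    fix i
    show "(if i \<in> I then ennreal (exp (- real (n i) * s + \<phi> (n i) (x i))) else 0)
       \<le> (if i \<in> I then ennreal (exp (- real (n i) * s + supball X T \<phi> (n i) (x i) eps)) else 0)"
      using supball_ge[where \<phi>=\<phi> and n="n i" and x="x i" and T=T and eps=eps, OF assms(1) assms(2)[of "n i"]] fam by (auto intro!: ennreal_leI)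
  qed
  then show "\<exists>q\<in>{(I, x, n). (\<forall>i\<in>I. x i \<in> X \<and> N \<le> n i) \<and> Z \<subseteq> (\<Union>i\<in>I. nbowen X T (n i) (x i) eps)}.
     (case q of (I, x, n) \<Rightarrow> \<Sum>i. if i \<in> I then ennreal (exp (- real (n i) * s + \<phi> (n i) (x i))) else 0)
     \<le> (case p of (I, x, n) \<Rightarrow> \<Sum>i. if i \<in> I then ennreal (exp (- real (n i) * s + supball X T \<phi> (n i) (x i) eps)) else 0)"
    using p pe by (intro bexI[of _ p]) auto
qed

lemma M_le_Mcal_dist:
  fixes s \<delta> :: real
  assumes "compact X" "\<And>n. continuous_on X (\<phi> n)"
    and dist: "\<forall>k\<ge>N. distortion X T \<phi> k eps \<le> real k * \<delta>"
  shows "Mcov X T \<phi> Z (s + \<delta>) N eps \<le> Mcalcov X T \<phi> Z s N eps"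
  unfolding Mcalcov_def Mcov_def
proof (rule INF_mono)
  fix p :: "nat set \<times> (nat \<Rightarrow> _) \<times> (nat \<Rightarrow> nat)" assume p: "p \<in> {(I, x, n). (\<forall>i\<in>I. x i \<in> X \<and> N \<le> n i) \<and> Z \<subseteq> (\<Union>i\<in>I. nbowen X T (n i) (x i) eps)}"
  obtain I x n where pe: "p = (I, x, n)" by (cases p) auto
  have fam: "\<forall>i\<in>I. x i \<in> X \<and> N \<le> n i" using p pe by auto
  have "(\<Sum>i. if i \<in> I then ennreal (exp (- real (n i) * (s + \<delta>) + supball X T \<phi> (n i) (x i) eps)) else 0)
     \<le> (\<Sum>i. if i \<in> I then ennreal (exp (- real (n i) * s + \<phi> (n i) (x i))) else 0)"
  proof (rule suminf_le[OF _ summableI summableI])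
    fix i
    show "(if i \<in> I then ennreal (exp (- real (n i) * (s + \<delta>) + supball X T \<phi> (n i) (x i) eps)) else 0)
       \<le> (if i \<in> I then ennreal (exp (- real (n i) * s + \<phi> (n i) (x i))) else 0)"
    proof (cases "i \<in> I")
      case True
      have a: "supball X T \<phi> (n i) (x i) eps \<le> \<phi> (n i) (x i) + distortion X T \<phi> (n i) eps"
        using supball_le[where \<phi>=\<phi> and n="n i" and x="x i" and T=T and eps=eps, OF assms(1) assms(2)[of "n i"]] fam True by blast
      have b: "distortion X T \<phi> (n i) eps \<le> real (n i) * \<delta>" using dist fam True by blast
      have "- real (n i) * (s + \<delta>) + supball X T \<phi> (n i) (x i) eps \<le> - real (n i) * s + \<phi> (n i) (x i)"
        using a b by (simp add: algebra_simps)
      then show ?thesis using True by (auto intro!: ennreal_leI)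
    qed simp
  qed
  then show "\<exists>q\<in>{(I, x, n). (\<forall>i\<in>I. x i \<in> X \<and> N \<le> n i) \<and> Z \<subseteq> (\<Union>i\<in>I. nbowen X T (n i) (x i) eps)}.
     (case q of (I, x, n) \<Rightarrow> \<Sum>i. if i \<in> I then ennreal (exp (- real (n i) * (s + \<delta>) + supball X T \<phi> (n i) (x i) eps)) else 0)
     \<le> (case p of (I, x, n) \<Rightarrow> \<Sum>i. if i \<in> I then ennreal (exp (- real (n i) * s + \<phi> (n i) (x i))) else 0)"
    using p pe by (intro bexI[of _ p]) auto
qed

lemma Mcal_mono_eps:
  fixes X :: "'a::metric_space set"
  assumes "eps' \<le> eps"
  shows "Mcalcov X T \<phi> Z s N eps' \<le> Mcalcov X T \<phi> Z s N eps"
  unfolding Mcalcov_def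
proof (rule INF_superset_mono)
  show "{(I, x, n). (\<forall>i\<in>I. x i \<in> X \<and> N \<le> n i) \<and> Z \<subseteq> (\<Union>i\<in>I. nbowen X T (n i) (x i) eps)} \<subseteq> {(I, x, n). (\<forall>i\<in>I. x i \<in> X \<and> N \<le> n i) \<and> Z \<subseteq> (\<Union>i\<in>I. nbowen X T (n i) (x i) eps')}"
    apply (rule subsetI)
    apply (simp only: mem_Collect_eq split_beta)
    using nbowen_mono[OF assms] by blast
qed simp

lemma Mcal_incN:
  fixes X :: "'a::metric_space set"
  assumes NN: "N \<le> N'"
  shows "Mcalcov X T \<phi> Z s N eps \<le> Mcalcov X T \<phi> Z s N' eps"
  unfolding Mcalcov_def
proof (rule INF_superset_mono)
  show "{(I, x, n). (\<forall>i\<in>I. x i \<in> X \<and> N' \<le> n i) \<and> Z \<subseteq> (\<Union>i\<in>I. nbowen X T (n i) (x i) eps)} \<subseteq> {(I, x, n). (\<forall>i\<in>I. x i \<in> X \<and> N \<le> n i) \<and> Z \<subseteq> (\<Union>i\<in>I. nbowen X T (n i) (x i) eps)}"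
    apply (rule subsetI)
    apply (simp only: mem_Collect_eq split_beta)
    using NN by (meson order_trans)
qed simp

lemma M_incN:
  fixes X :: "'a::metric_space set"
  assumes NN: "N \<le> N'"
  shows "Mcov X T \<phi> Z s N eps \<le> Mcov X T \<phi> Z s N' eps"
  unfolding Mcov_def
proof (rule INF_superset_mono)
  show "{(I, x, n). (\<forall>i\<in>I. x i \<in> X \<and> N' \<le> n i) \<and> Z \<subseteq> (\<Union>i\<in>I. nbowen X T (n i) (x i) eps)} \<subseteq> {(I, x, n). (\<forall>i\<in>I. x i \<in> X \<and> N \<le> n i) \<and> Z \<subseteq> (\<Union>i\<in>I. nbowen X T (n i) (x i) eps)}"
    apply (rule subsetI)
    apply (simp only: mem_Collect_eq split_beta)
    using NN by (meson order_trans)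
qed simp

lemma W_incN:
  fixes X :: "'a::metric_space set"
  assumes NN: "N \<le> N'"
  shows "Wcov X T \<phi> Z s N eps \<le> Wcov X T \<phi> Z s N' eps"
  unfolding Wcov_def
proof (rule INF_superset_mono)
  show "{(I, x, n, c). (\<forall>i\<in>I. x i \<in> X \<and> N' \<le> n i \<and> 0 < c i) \<and>
         (\<forall>z\<in>X. (if z \<in> Z then 1 else 0) \<le> (\<Sum>i. if i \<in> I \<and> z \<in> nbowen X T (n i) (x i) eps then ennreal (c i) else 0))} \<subseteq> {(I, x, n, c). (\<forall>i\<in>I. x i \<in> X \<and> N \<le> n i \<and> 0 < c i) \<and>
         (\<forall>z\<in>X. (if z \<in> Z then 1 else 0) \<le> (\<Sum>i. if i \<in> I \<and> z \<in> nbowen X T (n i) (x i) eps then ennreal (c i) else 0))}"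
    apply (rule subsetI)
    apply (simp only: mem_Collect_eq split_beta)
    using NN by (meson order_trans)
qed simp

lemma lim_le_ev:
  fixes a b :: "nat \<Rightarrow> ennreal"
  assumes "incseq a" "incseq b" "\<And>N. N0 \<le> N \<Longrightarrow> a N \<le> b N"
  shows "lim a \<le> lim b"
proof -
  have la: "lim a = (SUP N. a N)" using LIMSEQ_SUP[OF assms(1)] by (rule limI)
  have lb: "lim b = (SUP N. b N)" using LIMSEQ_SUP[OF assms(2)] by (rule limI)
  have "(SUP N. a N) \<le> (SUP N. b N)"
  proof (rule SUP_least)
    fix N
    have "a N \<le> a (max N N0)" using assms(1) by (simp add: incseq_def)
    also have "\<dots> \<le> b (max N N0)" using assms(3) by simp
    also have "\<dots> \<le> (SUP N. b N)" by (rule SUP_upper) simp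
    finally show "a N \<le> (SUP N. b N)" .
  qed
  then show ?thesis using la lb by simp
qed

lemma Mcal_le_W:
  fixes X Z :: "'a::metric_space set" and s :: real
  assumes cX: "compact X" and cphi: "\<And>n. continuous_on X (\<phi> n)" and ZX: "Z \<subseteq> X" and eps: "0 < eps"
    and N0: "\<forall>k\<ge>N. 3 * exp (- real k * eps) \<le> exp (- real k * (eps / 2))"
  shows "Mcalcov X T \<phi> Z s N (eps / 2) \<le> Wcov X T \<phi> Z s N eps"
  unfolding Wcov_def
proof (rule INF_greatest)
  fix p :: "nat set \<times> (nat \<Rightarrow> 'a) \<times> (nat \<Rightarrow> nat) \<times> (nat \<Rightarrow> real)" assume p: "p \<in> {(I, x, n, c). (\<forall>i\<in>I. x i \<in> X \<and> N \<le> n i \<and> 0 < c i) \<and>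
         (\<forall>z\<in>X. (if z \<in> Z then 1 else 0) \<le> (\<Sum>i. if i \<in> I \<and> z \<in> nbowen X T (n i) (x i) eps then ennreal (c i) else 0))}"
  obtain I x n c where pe: "p = (I, x, n, c)" by (cases p) auto
  have fam: "\<forall>i\<in>I. x i \<in> X \<and> N \<le> n i \<and> 0 < c i"
    and wt: "\<forall>z\<in>X. (if z \<in> Z then 1 else 0) \<le> (\<Sum>i. if i \<in> I \<and> z \<in> nbowen X T (n i) (x i) eps then ennreal (c i) else 0)"
    using p pe by auto
  define f where "f i = (if i \<in> I then c i * exp (- real (n i) * s + \<phi> (n i) (x i)) else 0)" for i
  have f0: "0 \<le> f i" for i using fam unfolding f_def by (simp add: less_imp_le)
  have le1: "(\<Sum>i. ennreal (f i)) \<le> (\<Sum>i. if i \<in> I then ennreal (c i) * ennreal (exp (- real (n i) * s + supball X T \<phi> (n i) (x i) eps)) else 0)"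
  proof (rule suminf_le[OF _ summableI summableI])
    fix i
    show "ennreal (f i) \<le> (if i \<in> I then ennreal (c i) * ennreal (exp (- real (n i) * s + supball X T \<phi> (n i) (x i) eps)) else 0)"
    proof (cases "i \<in> I")
      case True
      have xi: "x i \<in> X" using fam True by simp
      have "\<phi> (n i) (x i) \<le> supball X T \<phi> (n i) (x i) eps"
        by (rule supball_ge[where \<phi>=\<phi> and n="n i" and x="x i" and T=T and eps=eps, OF cX cphi[of "n i"] xi])
      then have "c i * exp (- real (n i) * s + \<phi> (n i) (x i)) \<le> c i * exp (- real (n i) * s + supball X T \<phi> (n i) (x i) eps)"
        using fam True by (intro mult_left_mono) (auto simp: less_imp_le)
      then have "ennreal (f i) \<le> ennreal (c i * exp (- real (n i) * s + supball X T \<phi> (n i) (x i) eps))"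
        using True unfolding f_def by (intro ennreal_leI) simp
      also have "\<dots> = ennreal (c i) * ennreal (exp (- real (n i) * s + supball X T \<phi> (n i) (x i) eps))"
        by (rule ennreal_mult'') simp
      finally show ?thesis using True by simp
    qed (simp add: f_def)
  qed
  have "Mcalcov X T \<phi> Z s N (eps / 2) \<le> (\<Sum>i. ennreal (f i))"
  proof (cases "(\<Sum>i. ennreal (f i)) = top")
    case True
    then show ?thesis by simp
  next
    case False
    have sf: "summable f" by (rule summable_suminf_not_top[OF f0 False])
    have eq: "(\<Sum>i. ennreal (f i)) = ennreal (suminf f)" by (rule suminf_ennreal2[OF f0 sf])
    define S where "S = suminf f"
    have S0: "0 \<le> S" unfolding S_def using sf f0 by (intro suminf_nonneg) auto
    have summ: "summable (\<lambda>i. if i \<in> I then c i * exp (- real (n i) * s + \<phi> (n i) (x i)) else 0)"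
      using sf unfolding f_def .
    have Seq: "S = (\<Sum>i. if i \<in> I then c i * exp (- real (n i) * s + \<phi> (n i) (x i)) else 0)"
      unfolding S_def f_def ..
    have key: "Mcalcov X T \<phi> Z s N (eps / 2) \<le> ennreal S + ennreal e" if e: "0 < e" for e
    proof -
      define \<gamma> where "\<gamma> = min (1/2) (e / (2 * (6 * S + 1)))"
      have d0: "0 < 2 * (6 * S + 1)" using S0 by simp
      have "0 < e / (2 * (6 * S + 1))" using e d0 by simp
      then have g1: "0 < \<gamma>" "\<gamma> \<le> 1/2" "\<gamma> \<le> e / (2 * (6 * S + 1))"
        unfolding \<gamma>_def by (simp_all only: min.cobounded1 min.cobounded2 min_less_iff_conj) simp
      have g2: "\<gamma> < 1" using g1 by simp
      have poly: "(1 + 6 * \<gamma>) * (1 - \<gamma>)^2 - 1 = \<gamma> * ((1 - 2 * \<gamma>) * (4 - 3 * \<gamma>))"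
        by (simp add: algebra_simps power2_eq_square)
      have "0 \<le> \<gamma> * ((1 - 2 * \<gamma>) * (4 - 3 * \<gamma>))" using g1 by (intro mult_nonneg_nonneg) auto
      then have p1: "1 \<le> (1 + 6 * \<gamma>) * (1 - \<gamma>)^2" using poly by linarith
      have pos: "0 < (1 - \<gamma>)^2" using g2 by simp
      have "S * 1 \<le> S * ((1 + 6 * \<gamma>) * (1 - \<gamma>)^2)" using mult_left_mono[OF p1 S0] .
      then have "S \<le> S * (1 + 6 * \<gamma>) * (1 - \<gamma>)^2" by (simp only: mult_1_right mult.assoc)
      then have A: "S / (1 - \<gamma>)^2 \<le> S * (1 + 6 * \<gamma>)" by (simp only: pos_divide_le_eq[OF pos])
      have "\<gamma> * (6 * S + 1) \<le> e / (2 * (6 * S + 1)) * (6 * S + 1)"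
        using g1(3) S0 by (intro mult_right_mono) auto
      also have "\<dots> = e / 2" using d0 by (simp add: field_simps)
      finally have B: "\<gamma> * (6 * S + 1) \<le> e / 2" .
      have "S * (1 + 6 * \<gamma>) + \<gamma> = S + \<gamma> * (6 * S + 1)" by (simp add: algebra_simps)
      then have C: "S / (1 - \<gamma>)^2 + \<gamma> \<le> S + e" using A B e by linarith
      have "Mcalcov X T \<phi> Z s N (eps / 2) \<le> ennreal (S / (1 - \<gamma>)^2 + \<gamma>)"
        using core_cover[OF eps N0 fam wt ZX summ g1(1) g2] by (simp only: Seq)
      also have "\<dots> \<le> ennreal (S + e)" using C by (rule ennreal_leI)
      also have "\<dots> = ennreal S + ennreal e" using S0 e by simp
      finally show ?thesis .
    qed
    have "suminf (\<lambda>i. ennreal (f i)) = ennreal S" using eq S_def by simp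
    then show ?thesis using key by (metis ennreal_le_epsilon)
  qed
  also note le1
  finally show "Mcalcov X T \<phi> Z s N (eps / 2) \<le> (case p of (I, x, n, c) \<Rightarrow> \<Sum>i. if i \<in> I then ennreal (c i) * ennreal (exp (- real (n i) * s + supball X T \<phi> (n i) (x i) eps)) else 0)"
    using pe by simp
qed

lemma N0_exists:
  assumes "0 < (eps::real)"
  shows "\<exists>N0. \<forall>k\<ge>N0. 3 * exp (- real k * eps) \<le> exp (- real k * (eps / 2))"
proof -
  obtain N0 :: nat where N0: "2 * ln 3 / eps < real N0" using reals_Archimedean2 by blast
  have "3 * exp (- real k * eps) \<le> exp (- real k * (eps / 2))" if k: "N0 \<le> k" for k
  proof -
    have "2 * ln 3 / eps < real k" using N0 k by linarith
    then have "2 * ln 3 < real k * eps" using assms by (simp add: divide_less_eq)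
    then have l: "ln 3 \<le> real k * (eps / 2)" by simp
    have "(3::real) = exp (ln 3)" by simp
    also have "\<dots> \<le> exp (real k * (eps / 2))" using l by (simp only: exp_le_cancel_iff)
    finally have a: "3 \<le> exp (real k * (eps / 2))" .
    define w where "w = exp (- real k * (eps / 2))"
    have u: "exp (- real k * eps) = w * w" unfolding w_def by (simp add: exp_add[symmetric])
    have v: "w * exp (real k * (eps / 2)) = 1" unfolding w_def by (simp add: exp_add[symmetric])
    have w0: "0 < w" unfolding w_def by simp
    have "3 * w \<le> exp (real k * (eps / 2)) * w" using a w0 by (intro mult_right_mono) auto
    then have c: "3 * w \<le> 1" using v by (simp add: mult.commute)
    have "(3 * w) * w \<le> 1 * w" using c w0 by (intro mult_right_mono) auto
    then show ?thesis unfolding u w_def[symmetric] by (simp add: mult.assoc)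
  qed
  then show ?thesis by blast
qed

theorem mainTheorem3:
  fixes X Z :: "'a::metric_space set" and T :: "'a \<Rightarrow> 'a" and \<phi> :: "nat \<Rightarrow> 'a \<Rightarrow> real"
  assumes "compact X"
    and "continuous_on X T" and "T ` X \<subseteq> X"
    and "Z \<subseteq> X" and "Z \<noteq> {}"
    and "\<And>n. continuous_on X (\<phi> n)"
    and "((\<lambda>eps. limsup (\<lambda>n. ereal (distortion X T \<phi> n eps / real n))) \<longlongrightarrow> 0) (at_right 0)"
  shows "(\<forall>\<theta>>0. \<exists>eps0>0. \<forall>eps. 0 < eps \<and> eps < eps0 \<longrightarrow>
            (\<exists>N0. \<forall>N\<ge>N0. \<forall>s.
               Mcalcov X T \<phi> Z (s + \<theta>) N (eps / 2) \<le> Wcov X T \<phi> Z s N eps \<and>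
               Wcov X T \<phi> Z s N eps \<le> Mcov X T \<phi> Z s N eps))
         \<and> PB X T \<phi> Z = PWB X T \<phi> Z"
proof -
  note cX = assms(1) and ZX = assms(4) and cphi = assms(6) and tdist = assms(7)
  have part1: "\<forall>\<theta>>0. \<exists>eps0>0. \<forall>eps. 0 < eps \<and> eps < eps0 \<longrightarrow>
            (\<exists>N0. \<forall>N\<ge>N0. \<forall>s.
               Mcalcov X T \<phi> Z (s + \<theta>) N (eps / 2) \<le> Wcov X T \<phi> Z s N eps \<and>
               Wcov X T \<phi> Z s N eps \<le> Mcov X T \<phi> Z s N eps)"
  proof (intro allI impI)
    fix \<theta> :: real assume th: "0 < \<theta>"
    show "\<exists>eps0>0. \<forall>eps. 0 < eps \<and> eps < eps0 \<longrightarrow>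
            (\<exists>N0. \<forall>N\<ge>N0. \<forall>s.
               Mcalcov X T \<phi> Z (s + \<theta>) N (eps / 2) \<le> Wcov X T \<phi> Z s N eps \<and>
               Wcov X T \<phi> Z s N eps \<le> Mcov X T \<phi> Z s N eps)"
    proof (rule exI[of _ "1::real"], intro conjI allI impI)
      fix eps :: real assume e: "0 < eps \<and> eps < 1"
      obtain N0 where N0: "\<forall>k\<ge>N0. 3 * exp (- real k * eps) \<le> exp (- real k * (eps / 2))"
        using N0_exists e by blast
      show "\<exists>N0. \<forall>N\<ge>N0. \<forall>s.
               Mcalcov X T \<phi> Z (s + \<theta>) N (eps / 2) \<le> Wcov X T \<phi> Z s N eps \<and>
               Wcov X T \<phi> Z s N eps \<le> Mcov X T \<phi> Z s N eps"
      proof (intro exI[of _ N0] allI impI conjI)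
        fix N s assume N: "N0 \<le> N"
        have N0': "\<forall>k\<ge>N. 3 * exp (- real k * eps) \<le> exp (- real k * (eps / 2))" using N0 N by auto
        have "Mcalcov X T \<phi> Z (s + \<theta>) N (eps / 2) \<le> Mcalcov X T \<phi> Z s N (eps / 2)"
          using th by (intro Mcal_mono_s) simp
        also have "\<dots> \<le> Wcov X T \<phi> Z s N eps"
          using e by (intro Mcal_le_W[OF cX cphi ZX _ N0']) simp
        finally show "Mcalcov X T \<phi> Z (s + \<theta>) N (eps / 2) \<le> Wcov X T \<phi> Z s N eps" .
        show "Wcov X T \<phi> Z s N eps \<le> Mcov X T \<phi> Z s N eps" by (rule W_le_M)
      qed
    qed simp
  qed
  define Mcl where "Mcl s eps = lim (\<lambda>N. Mcalcov X T \<phi> Z s N eps)" for s eps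
  define g where "g eps = Inf {ereal s | s. Mcl s eps = 0}" for eps
  have incMcal: "incseq (\<lambda>N. Mcalcov X T \<phi> Z s N eps)" for s eps
    by (rule incseq_SucI) (rule Mcal_incN, simp)
  have incM: "incseq (\<lambda>N. Mcov X T \<phi> Z s N eps)" for s eps
    by (rule incseq_SucI) (rule M_incN, simp)
  have incW: "incseq (\<lambda>N. Wcov X T \<phi> Z s N eps)" for s eps
    by (rule incseq_SucI) (rule W_incN, simp)
  have McalM: "Mcl s eps \<le> Mlim X T \<phi> Z s eps" for s eps
    unfolding Mcl_def Mlim_def by (rule lim_le_ev[OF incMcal incM Mcal_le_M[OF cX cphi]])
  have WM: "Wlim X T \<phi> Z s eps \<le> Mlim X T \<phi> Z s eps" for s eps
    unfolding Wlim_def Mlim_def by (rule lim_le_ev[OF incW incM W_le_M])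
  have McalW: "Mcl s (eps / 2) \<le> Wlim X T \<phi> Z s eps" if e: "0 < eps" for s eps
  proof -
    obtain N0 where N0: "\<forall>k\<ge>N0. 3 * exp (- real k * eps) \<le> exp (- real k * (eps / 2))"
      using N0_exists e by blast
    show ?thesis unfolding Mcl_def Wlim_def
    proof (rule lim_le_ev[OF incMcal incW])
      fix N assume "N0 \<le> N"
      then have N0': "\<forall>k\<ge>N. 3 * exp (- real k * eps) \<le> exp (- real k * (eps / 2))" using N0 by auto
      show "Mcalcov X T \<phi> Z s N (eps / 2) \<le> Wcov X T \<phi> Z s N eps"
        by (rule Mcal_le_W[OF cX cphi ZX e N0'])
    qed
  qed
  have Mcl_mono: "Mcl s eps' \<le> Mcl s eps" if "eps' \<le> eps" for s eps eps'
    unfolding Mcl_def by (rule lim_le_ev[OF incMcal incMcal Mcal_mono_eps[OF that]])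
  have g_mono: "g eps' \<le> g eps" if "eps' \<le> eps" for eps eps'
    unfolding g_def
  proof (rule Inf_superset_mono)
    show "{ereal s |s. Mcl s eps = 0} \<subseteq> {ereal s |s. Mcl s eps' = 0}"
    proof
      fix t assume "t \<in> {ereal s |s. Mcl s eps = 0}"
      then obtain s where s: "t = ereal s" "Mcl s eps = 0" by blast
      have "Mcl s eps' \<le> Mcl s eps" using Mcl_mono[OF that] .
      then have "Mcl s eps' = 0" using s(2) by simp
      then show "t \<in> {ereal s |s. Mcl s eps' = 0}" using s(1) by blast
    qed
  qed
  have g_Mcrit: "g eps \<le> Mcrit X T \<phi> Z eps" for eps
    unfolding g_def Mcrit_def
  proof (rule Inf_superset_mono)
    show "{ereal s |s. Mlim X T \<phi> Z s eps = 0} \<subseteq> {ereal s |s. Mcl s eps = 0}"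
    proof
      fix t assume "t \<in> {ereal s |s. Mlim X T \<phi> Z s eps = 0}"
      then obtain s where s: "t = ereal s" "Mlim X T \<phi> Z s eps = 0" by blast
      have "Mcl s eps \<le> Mlim X T \<phi> Z s eps" using McalM .
      then have "Mcl s eps = 0" using s(2) by simp
      then show "t \<in> {ereal s |s. Mcl s eps = 0}" using s(1) by blast
    qed
  qed
  have Wcrit_Mcrit: "Wcrit X T \<phi> Z eps \<le> Mcrit X T \<phi> Z eps" for eps
    unfolding Wcrit_def Mcrit_def
  proof (rule Inf_superset_mono)
    show "{ereal s |s. Mlim X T \<phi> Z s eps = 0} \<subseteq> {ereal s |s. Wlim X T \<phi> Z s eps = 0}"
    proof
      fix t assume "t \<in> {ereal s |s. Mlim X T \<phi> Z s eps = 0}"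
      then obtain s where s: "t = ereal s" "Mlim X T \<phi> Z s eps = 0" by blast
      have "Wlim X T \<phi> Z s eps \<le> Mlim X T \<phi> Z s eps" using WM .
      then have "Wlim X T \<phi> Z s eps = 0" using s(2) by simp
      then show "t \<in> {ereal s |s. Wlim X T \<phi> Z s eps = 0}" using s(1) by blast
    qed
  qed
  have g_Wcrit: "g (eps / 2) \<le> Wcrit X T \<phi> Z eps" if "0 < eps" for eps
    unfolding g_def Wcrit_def
  proof (rule Inf_superset_mono)
    show "{ereal s |s. Wlim X T \<phi> Z s eps = 0} \<subseteq> {ereal s |s. Mcl s (eps / 2) = 0}"
    proof
      fix t assume "t \<in> {ereal s |s. Wlim X T \<phi> Z s eps = 0}"
      then obtain s where s: "t = ereal s" "Wlim X T \<phi> Z s eps = 0" by blast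
      have "Mcl s (eps / 2) \<le> Wlim X T \<phi> Z s eps" using McalW[OF that] .
      then have "Mcl s (eps / 2) = 0" using s(2) by simp
      then show "t \<in> {ereal s |s. Mcl s (eps / 2) = 0}" using s(1) by blast
    qed
  qed
  have distev: "\<exists>e1>0. \<forall>eps. 0 < eps \<and> eps < e1 \<longrightarrow> (\<exists>N1. \<forall>k\<ge>N1. distortion X T \<phi> k eps \<le> real k * \<delta>)"
    if d: "0 < \<delta>" for \<delta> :: real
  proof -
    have "eventually (\<lambda>eps. limsup (\<lambda>n. ereal (distortion X T \<phi> n eps / real n)) < ereal \<delta>) (at_right 0)"
      using d by (intro order_tendstoD(2)[OF tdist]) simp
    then have "\<exists>b>0. \<forall>y>0. y < b \<longrightarrow> limsup (\<lambda>n. ereal (distortion X T \<phi> n y / real n)) < ereal \<delta>"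
      by (simp add: eventually_at_right_field)
    then obtain e1 where e1: "0 < e1" "\<forall>y>0. y < e1 \<longrightarrow> limsup (\<lambda>n. ereal (distortion X T \<phi> n y / real n)) < ereal \<delta>"
      by blast
    have "\<exists>N1. \<forall>k\<ge>N1. distortion X T \<phi> k eps \<le> real k * \<delta>" if ee: "0 < eps" "eps < e1" for eps
    proof -
      have "eventually (\<lambda>n. ereal (distortion X T \<phi> n eps / real n) < ereal \<delta>) sequentially"
        using e1(2) ee by (intro Limsup_lessD) auto
      moreover have "eventually (\<lambda>n. 0 < n) sequentially" by (rule eventually_gt_at_top)
      ultimately have "eventually (\<lambda>n. ereal (distortion X T \<phi> n eps / real n) < ereal \<delta> \<and> 0 < n) sequentially"
        by (rule eventually_conj)
      then obtain N1 where N1: "\<And>k. N1 \<le> k \<Longrightarrow> ereal (distortion X T \<phi> k eps / real k) < ereal \<delta> \<and> 0 < k"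
        unfolding eventually_sequentially by blast
      have "distortion X T \<phi> k eps \<le> real k * \<delta>" if "N1 \<le> k" for k
      proof -
        have "distortion X T \<phi> k eps / real k < \<delta>" "0 < k" using N1[OF that] by auto
        then show ?thesis by (simp add: divide_less_eq mult.commute)
      qed
      then show ?thesis by blast
    qed
    then show ?thesis using e1(1) by blast
  qed
  have Mcrit_upper: "Mcrit X T \<phi> Z eps < ereal (b + \<delta>)"
    if d: "0 < \<delta>" and ee: "0 < eps" and dd: "\<exists>N1. \<forall>k\<ge>N1. distortion X T \<phi> k eps \<le> real k * \<delta>"
      and gb: "g eps < ereal b" for eps b \<delta>
  proof -
    obtain N1 where N1: "\<forall>k\<ge>N1. distortion X T \<phi> k eps \<le> real k * \<delta>" using dd by blast
    from gb obtain t where t: "t \<in> {ereal s |s. Mcl s eps = 0}" "t < ereal b" unfolding g_def by (auto simp: Inf_less_iff)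
    then obtain s where s: "t = ereal s" "Mcl s eps = 0" by blast
    have "Mlim X T \<phi> Z (s + \<delta>) eps \<le> Mcl s eps"
      unfolding Mlim_def Mcl_def
    proof (rule lim_le_ev[OF incM incMcal])
      fix N assume "N1 \<le> N"
      then have "\<forall>k\<ge>N. distortion X T \<phi> k eps \<le> real k * \<delta>" using N1 by auto
      then show "Mcov X T \<phi> Z (s + \<delta>) N eps \<le> Mcalcov X T \<phi> Z s N eps"
        by (rule M_le_Mcal_dist[OF cX cphi])
    qed
    then have "Mlim X T \<phi> Z (s + \<delta>) eps = 0" using s(2) by simp
    then have "Mcrit X T \<phi> Z eps \<le> ereal (s + \<delta>)" unfolding Mcrit_def by (intro Inf_lower) blast
    also have "\<dots> < ereal (b + \<delta>)" using t s by simp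
    finally show ?thesis .
  qed
  define L where "L = Inf (g ` {0<..})"
  have gL: "L \<le> g eps" if "0 < eps" for eps unfolding L_def using that by (intro INF_lower) simp
  have upper: "eventually (\<lambda>eps. Mcrit X T \<phi> Z eps < a) (at_right 0)" if La: "L < a" for a
  proof -
    obtain b1 where b1: "L < ereal b1" "ereal b1 < a" using ereal_dense2[OF La] by blast
    obtain b2 where b2: "ereal b1 < ereal b2" "ereal b2 < a" using ereal_dense2[OF b1(2)] by blast
    define \<delta> where "\<delta> = b2 - b1"
    have d: "0 < \<delta>" using b2(1) unfolding \<delta>_def by simp
    obtain e1 where e1: "0 < e1" "\<forall>eps. 0 < eps \<and> eps < e1 \<longrightarrow> (\<exists>N1. \<forall>k\<ge>N1. distortion X T \<phi> k eps \<le> real k * \<delta>)"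
      using distev[OF d] by blast
    from b1(1) obtain e2 where e2: "e2 \<in> {0<..}" "g e2 < ereal b1" unfolding L_def by (auto simp: INF_less_iff)
    have "Mcrit X T \<phi> Z eps < a" if "0 < eps" "eps < min e1 e2" for eps
    proof -
      have "g eps \<le> g e2" using that by (intro g_mono) simp
      then have "g eps < ereal b1" using e2 by simp
      then have "Mcrit X T \<phi> Z eps < ereal (b1 + \<delta>)"
        using Mcrit_upper[OF d that(1)] e1 that by auto
      also have "ereal (b1 + \<delta>) = ereal b2" unfolding \<delta>_def by simp
      finally show ?thesis using b2(2) by simp
    qed
    moreover have "0 < min e1 e2" using e1 e2 by simp
    ultimately show ?thesis unfolding eventually_at_right_field by blast
  qed
  have posev: "eventually (\<lambda>eps::real. 0 < eps) (at_right 0)" by (rule eventually_at_right_less)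
  have limM: "((\<lambda>eps. Mcrit X T \<phi> Z eps) \<longlongrightarrow> L) (at_right 0)"
  proof (rule order_tendstoI)
    fix a assume aL: "a < L"
    show "eventually (\<lambda>eps. a < Mcrit X T \<phi> Z eps) (at_right 0)"
      using posev
    proof eventually_elim
      case (elim eps)
      have "L \<le> g eps" using elim by (rule gL)
      also have "\<dots> \<le> Mcrit X T \<phi> Z eps" by (rule g_Mcrit)
      finally show ?case using aL by simp
    qed
  next
    fix a assume "L < a"
    then show "eventually (\<lambda>eps. Mcrit X T \<phi> Z eps < a) (at_right 0)" by (rule upper)
  qed
  have limW: "((\<lambda>eps. Wcrit X T \<phi> Z eps) \<longlongrightarrow> L) (at_right 0)"
  proof (rule order_tendstoI)
    fix a assume aL: "a < L"
    show "eventually (\<lambda>eps. a < Wcrit X T \<phi> Z eps) (at_right 0)"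
      using posev
    proof eventually_elim
      case (elim eps)
      have "L \<le> g (eps / 2)" using elim by (intro gL) simp
      also have "\<dots> \<le> Wcrit X T \<phi> Z eps" using elim by (rule g_Wcrit)
      finally show ?case using aL by simp
    qed
  next
    fix a assume "L < a"
    then have "eventually (\<lambda>eps. Mcrit X T \<phi> Z eps < a) (at_right 0)" by (rule upper)
    then show "eventually (\<lambda>eps. Wcrit X T \<phi> Z eps < a) (at_right 0)"
      by eventually_elim (meson Wcrit_Mcrit le_less_trans)
  qed
  have "PB X T \<phi> Z = L" unfolding PB_def by (rule tendsto_Lim[OF trivial_limit_at_right_real limM])
  moreover have "PWB X T \<phi> Z = L" unfolding PWB_def by (rule tendsto_Lim[OF trivial_limit_at_right_real limW])
  ultimately show ?thesis using part1 by simp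
qed

end
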